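(* There exist absolute constants $c>0$ and $\rho>0$ such that for every even $k\ge2$ and every $p\in\Delta([k]\times[k])$ with marginals $p_1,p_2$, if $S_1,S_2$ are independent uniformly random subsets of $[k]$ of cardinality $k/2$, then $$\Pr\Big[\big|p(S_1\times S_2)-p_1(S_1)p_2(S_2)\big|\ge c\,\frac{d_{TV}(p,p_1\otimes p_2)}{k}\Big]\ge\rho .$$
   Context: $\Delta([k]\times[k])$ is the set of probability distributions on $[k]\times[k]$; $p_1(x)=\sum_y p(x,y)$, $p_2(y)=\sum_x p(x,y)$; $(p_1\otimes p_2)(x,y)=p_1(x)p_2(y)$; $d_{TV}(p,q)=\frac12\|p-q\|_1$; for a set $A$, $p(A)=\sum_{a\in A}p(a)$. *)

theory Defs
  imports Complex_Main
begin

definition is_dist :: "nat \<Rightarrow> (nat \<times> nat \<Rightarrow> real) \<Rightarrow> bool" where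
  "is_dist k p \<longleftrightarrow> (\<forall>z. p z \<ge> 0) \<and> (\<forall>z. z \<notin> {1..k} \<times> {1..k} \<longrightarrow> p z = 0)
     \<and> (\<Sum>z\<in>{1..k} \<times> {1..k}. p z) = 1"

definition marg1 :: "nat \<Rightarrow> (nat \<times> nat \<Rightarrow> real) \<Rightarrow> nat \<Rightarrow> real" where
  "marg1 k p x = (\<Sum>y\<in>{1..k}. p (x, y))"

definition marg2 :: "nat \<Rightarrow> (nat \<times> nat \<Rightarrow> real) \<Rightarrow> nat \<Rightarrow> real" where
  "marg2 k p y = (\<Sum>x\<in>{1..k}. p (x, y))"

definition prod_dist :: "(nat \<Rightarrow> real) \<Rightarrow> (nat \<Rightarrow> real) \<Rightarrow> nat \<times> nat \<Rightarrow> real" where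
  "prod_dist q r = (\<lambda>(x, y). q x * r y)"

definition dTV :: "nat \<Rightarrow> (nat \<times> nat \<Rightarrow> real) \<Rightarrow> (nat \<times> nat \<Rightarrow> real) \<Rightarrow> real" where
  "dTV k p q = (1/2) * (\<Sum>z\<in>{1..k} \<times> {1..k}. \<bar>p z - q z\<bar>)"

definition mass :: "('a \<Rightarrow> real) \<Rightarrow> 'a set \<Rightarrow> real" where
  "mass p A = (\<Sum>a\<in>A. p a)"

text \<open>The k/2-subsets of [k]; (S1,S2) uniform on half_subsets k x half_subsets k.\<close>
definition half_subsets :: "nat \<Rightarrow> nat set set" where
  "half_subsets k = {S. S \<subseteq> {1..k} \<and> card S = k div 2}"

end

theory Submission
  imports Defs "HOL-Analysis.Convex"
begin


definition HS :: "'a set \<Rightarrow> nat \<Rightarrow> 'a set set" where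
  "HS I m = {S. S \<subseteq> I \<and> card S = m}"

definition cnt :: "nat \<Rightarrow> nat \<Rightarrow> nat \<Rightarrow> nat" where
  "cnt N m j = (if j \<le> m then (N - j) choose (m - j) else 0)"

lemma finite_HS: "finite I \<Longrightarrow> finite (HS I m)"
  unfolding HS_def by (rule finite_subset[of _ "Pow I"]) auto

lemma card_sup:
  assumes fin: "finite I" and A: "A \<subseteq> I"
  shows "card {S\<in>HS I m. A \<subseteq> S} = cnt (card I) m (card A)"
proof (cases "card A \<le> m")
  case False
  have "{S\<in>HS I m. A \<subseteq> S} = {}"
  proof (rule ccontr)
    assume "{S\<in>HS I m. A \<subseteq> S} \<noteq> {}"
    then obtain S where "S \<subseteq> I" "card S = m" "A \<subseteq> S" unfolding HS_def by auto
    then have "card A \<le> m" using card_mono[of S A] fin finite_subset by metis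
    then show False using False by simp
  qed
  then show ?thesis unfolding cnt_def using False by (simp only: card.empty if_False)
next
  case True
  have finA: "finite A" using A fin finite_subset by blast
  have "bij_betw (\<lambda>S. S - A) {S\<in>HS I m. A \<subseteq> S} {T. T \<subseteq> I - A \<and> card T = m - card A}"
  proof (rule bij_betw_byWitness[where f'="\<lambda>T. T \<union> A"])
    show "\<forall>a\<in>{S \<in> HS I m. A \<subseteq> S}. a - A \<union> A = a" by auto
    show "\<forall>a'\<in>{T. T \<subseteq> I - A \<and> card T = m - card A}. a' \<union> A - A = a'" by auto
    show "(\<lambda>S. S - A) ` {S \<in> HS I m. A \<subseteq> S} \<subseteq> {T. T \<subseteq> I - A \<and> card T = m - card A}"
    proof clarify
      fix S assume "S \<in> HS I m" "A \<subseteq> S"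
      then have "S \<subseteq> I" "card S = m" unfolding HS_def by auto
      then show "S - A \<subseteq> I - A \<and> card (S - A) = m - card A"
        using \<open>A \<subseteq> S\<close> card_Diff_subset[OF finA \<open>A \<subseteq> S\<close>] by auto
    qed
    show "(\<lambda>T. T \<union> A) ` {T. T \<subseteq> I - A \<and> card T = m - card A} \<subseteq> {S \<in> HS I m. A \<subseteq> S}"
    proof clarify
      fix T assume T: "T \<subseteq> I - A" "card T = m - card A"
      have "finite T" using T fin finite_subset by blast
      moreover have "T \<inter> A = {}" using T by auto
      ultimately have "card (T \<union> A) = card T + card A" using card_Un_disjoint[OF _ finA] by blast
      then show "T \<union> A \<in> HS I m \<and> A \<subseteq> T \<union> A" using T True A unfolding HS_def by auto
    qed
  qed
  then have "card {S\<in>HS I m. A \<subseteq> S} = card {T. T \<subseteq> I - A \<and> card T = m - card A}"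
    by (rule bij_betw_same_card)
  also have "\<dots> = card (I - A) choose (m - card A)" using fin by (simp add: n_subsets)
  also have "card (I - A) = card I - card A" using card_Diff_subset[OF finA A] .
  finally show ?thesis using True unfolding cnt_def by simp
qed

lemma sum_bool_sup:
  assumes fin: "finite I" and A: "A \<subseteq> I"
  shows "(\<Sum>S\<in>HS I m. (of_bool (A \<subseteq> S) :: real)) = real (cnt (card I) m (card A))"
proof -
  have "(\<Sum>S\<in>HS I m. (of_bool (A \<subseteq> S) :: real)) = real (card {S\<in>HS I m. A \<subseteq> S})"
    using finite_HS[OF fin] by (simp add: of_bool_def sum.If_cases Int_def)
  then show ?thesis using card_sup[OF assms] by simp
qed

lemma sum_bool_sup_c:
  assumes fin: "finite I" and A: "A \<subseteq> I"
  shows "(\<Sum>S\<in>HS I m. c * (of_bool (A \<subseteq> S) :: real)) = c * real (cnt (card I) m (card A))"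
  by (simp only: sum_distrib_left[symmetric] sum_bool_sup[OF assms])

lemma pow4_sum: "(\<Sum>x\<in>I. f x)^4 = (\<Sum>x\<in>I. \<Sum>y\<in>I. \<Sum>z\<in>I. \<Sum>u\<in>I. f x * f y * f z * (f u::real))"
proof -
  have "(\<Sum>x\<in>I. f x)^4 = (\<Sum>x\<in>I. f x) * (\<Sum>x\<in>I. f x) * (\<Sum>x\<in>I. f x) * (\<Sum>x\<in>I. f x)"
    by (simp add: power4_eq_xxxx)
  also have "\<dots> = (\<Sum>x\<in>I. \<Sum>y\<in>I. \<Sum>z\<in>I. \<Sum>u\<in>I. f x * f y * f z * (f u::real))"
    by (simp add: sum_distrib_left sum_distrib_right mult_ac)
  finally show ?thesis .
qed

lemma sum_restr: "finite I \<Longrightarrow> S \<subseteq> I \<Longrightarrow> (\<Sum>x\<in>S. w x) = (\<Sum>x\<in>I. w x * (of_bool (x \<in> S)::real))"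
proof -
  assume "finite I" "S \<subseteq> I"
  then have "(\<Sum>x\<in>I. w x * (of_bool (x \<in> S)::real)) = sum w (I \<inter> S)"
    by (simp add: sum.inter_restrict of_bool_def if_distrib cong: if_cong)
  then show ?thesis using \<open>S \<subseteq> I\<close> by (simp add: Int_absorb1)
qed

lemma mom2:
  assumes fin: "finite I"
  shows "(\<Sum>S\<in>HS I m. (\<Sum>x\<in>S. w x)^2) = (\<Sum>x\<in>I. \<Sum>y\<in>I. w x * w y * real (cnt (card I) m (card {x,y})))"
proof -
  have "(\<Sum>S\<in>HS I m. (\<Sum>x\<in>S. w x)^2) = (\<Sum>S\<in>HS I m. \<Sum>x\<in>I. \<Sum>y\<in>I. w x * w y * (of_bool ({x,y} \<subseteq> S)::real))"
  proof (rule sum.cong[OF refl])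
    fix S assume "S \<in> HS I m"
    then have "S \<subseteq> I" unfolding HS_def by auto
    then show "(\<Sum>x\<in>S. w x)^2 = (\<Sum>x\<in>I. \<Sum>y\<in>I. w x * w y * (of_bool ({x,y} \<subseteq> S)::real))"
      unfolding sum_restr[OF fin \<open>S \<subseteq> I\<close>, of w] power2_eq_square sum_product
      by (intro sum.cong refl) (simp add: of_bool_def)
  qed
  also have "\<dots> = (\<Sum>x\<in>I. \<Sum>y\<in>I. \<Sum>S\<in>HS I m. w x * w y * (of_bool ({x,y} \<subseteq> S)::real))"
    by (simp only: sum.swap[where A="HS I m"])
  also have "\<dots> = (\<Sum>x\<in>I. \<Sum>y\<in>I. w x * w y * real (cnt (card I) m (card {x,y})))"
    by (intro sum.cong refl) (rule sum_bool_sup_c[OF fin]; simp)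
  finally show ?thesis .
qed

lemma mom4:
  assumes fin: "finite I"
  shows "(\<Sum>S\<in>HS I m. (\<Sum>x\<in>S. w x)^4) = (\<Sum>x\<in>I. \<Sum>y\<in>I. \<Sum>z\<in>I. \<Sum>u\<in>I. w x * w y * w z * w u * real (cnt (card I) m (card (insert u (insert z {x,y})))))"
proof -
  have "(\<Sum>S\<in>HS I m. (\<Sum>x\<in>S. w x)^4) = (\<Sum>S\<in>HS I m. \<Sum>x\<in>I. \<Sum>y\<in>I. \<Sum>z\<in>I. \<Sum>u\<in>I. w x * w y * w z * w u * (of_bool (insert u (insert z {x,y}) \<subseteq> S)::real))"
  proof (rule sum.cong[OF refl])
    fix S assume "S \<in> HS I m"
    then have "S \<subseteq> I" unfolding HS_def by auto
    then show "(\<Sum>x\<in>S. w x)^4 = (\<Sum>x\<in>I. \<Sum>y\<in>I. \<Sum>z\<in>I. \<Sum>u\<in>I. w x * w y * w z * w u * (of_bool (insert u (insert z {x,y}) \<subseteq> S)::real))"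
      unfolding sum_restr[OF fin \<open>S \<subseteq> I\<close>, of w] pow4_sum
      by (intro sum.cong refl) (simp add: of_bool_def)
  qed
  also have "\<dots> = (\<Sum>x\<in>I. \<Sum>y\<in>I. \<Sum>z\<in>I. \<Sum>u\<in>I. \<Sum>S\<in>HS I m. w x * w y * w z * w u * (of_bool (insert u (insert z {x,y}) \<subseteq> S)::real))"
    by (simp only: sum.swap[where A="HS I m"])
  also have "\<dots> = (\<Sum>x\<in>I. \<Sum>y\<in>I. \<Sum>z\<in>I. \<Sum>u\<in>I. w x * w y * w z * w u * real (cnt (card I) m (card (insert u (insert z {x,y})))))"
    by (intro sum.cong refl) (rule sum_bool_sup_c[OF fin]; simp)
  finally show ?thesis .
qed



lemma elim1:
  fixes w :: "'a \<Rightarrow> real"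
  assumes fin: "finite I" and T: "T \<subseteq> I" and w0: "sum w I = 0"
  shows "(\<Sum>u\<in>I. w u * h (card (insert u T))) = (h (card T) - h (Suc (card T))) * sum w T"
proof -
  have finT: "finite T" using fin T finite_subset by blast
  have "(\<Sum>u\<in>I. w u * h (card (insert u T))) = (\<Sum>u\<in>T. w u * h (card (insert u T))) + (\<Sum>u\<in>I-T. w u * h (card (insert u T)))"
    by (subst sum.subset_diff[OF T fin]) (rule add.commute)
  also have "(\<Sum>u\<in>T. w u * h (card (insert u T))) = (\<Sum>u\<in>T. w u * h (card T))"
    by (intro sum.cong refl) (simp add: insert_absorb)
  also have "(\<Sum>u\<in>I-T. w u * h (card (insert u T))) = (\<Sum>u\<in>I-T. w u * h (Suc (card T)))"
    by (intro sum.cong refl) (simp add: finT)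
  also have "sum w (I - T) = - sum w T" using sum.subset_diff[OF T fin, of w] w0 by simp
  ultimately show ?thesis by (simp add: sum_distrib_right[symmetric] algebra_simps)
qed

lemma elim2:
  fixes w :: "'a \<Rightarrow> real"
  assumes fin: "finite I" and T: "T \<subseteq> I" and w0: "sum w I = 0"
  shows "(\<Sum>z\<in>I. w z * g (card (insert z T)) * sum w (insert z T)) =
     g (card T) * (sum w T)^2 + g (Suc (card T)) * ((\<Sum>v\<in>I. (w v)^2) - (\<Sum>v\<in>T. (w v)^2) - (sum w T)^2)"
proof -
  have finT: "finite T" using fin T finite_subset by blast
  have "(\<Sum>z\<in>I. w z * g (card (insert z T)) * sum w (insert z T)) = (\<Sum>z\<in>T. w z * g (card (insert z T)) * sum w (insert z T)) + (\<Sum>z\<in>I-T. w z * g (card (insert z T)) * sum w (insert z T))"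
    by (subst sum.subset_diff[OF T fin]) (rule add.commute)
  also have "(\<Sum>z\<in>T. w z * g (card (insert z T)) * sum w (insert z T)) = (\<Sum>z\<in>T. w z * (g (card T) * sum w T))"
    by (intro sum.cong refl) (simp add: insert_absorb)
  also have "\<dots> = g (card T) * (sum w T)^2" by (simp add: sum_distrib_right[symmetric] power2_eq_square)
  also have "(\<Sum>z\<in>I-T. w z * g (card (insert z T)) * sum w (insert z T)) = (\<Sum>z\<in>I-T. g (Suc (card T)) * ((w z)^2 + sum w T * w z))"
    by (intro sum.cong refl) (simp add: finT power2_eq_square algebra_simps)
  also have "\<dots> = g (Suc (card T)) * ((\<Sum>z\<in>I-T. (w z)^2) + sum w T * sum w (I-T))"
    by (simp add: sum_distrib_left[symmetric] sum.distrib)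
  also have "sum w (I - T) = - sum w T" using sum.subset_diff[OF T fin, of w] w0 by simp
  also have "(\<Sum>z\<in>I-T. (w z)^2) = (\<Sum>v\<in>I. (w v)^2) - (\<Sum>v\<in>T. (w v)^2)"
    using sum.subset_diff[OF T fin, of "\<lambda>v. (w v)^2"] by simp
  finally show ?thesis by (simp add: power2_eq_square algebra_simps)
qed

lemma m4_formula:
  fixes w :: "'a \<Rightarrow> real" and h :: "nat \<Rightarrow> real"
  assumes fin: "finite I" and w0: "sum w I = 0"
  defines "D \<equiv> \<lambda>j. h j - h (Suc j)"
  shows "(\<Sum>x\<in>I. \<Sum>y\<in>I. \<Sum>z\<in>I. \<Sum>u\<in>I. w x * w y * w z * w u * h (card (insert u (insert z {x,y}))))
    = 3 * (D 2 - D 3) * (\<Sum>v\<in>I. (w v)^2)^2 + (D 1 - 6 * D 2 + 6 * D 3) * (\<Sum>v\<in>I. (w v)^4)"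
proof -
  define P2 where "P2 = (\<Sum>v\<in>I. (w v)^2)"
  define P3 where "P3 = (\<Sum>v\<in>I. (w v)^3)"
  define P4 where "P4 = (\<Sum>v\<in>I. (w v)^4)"
  define F where "F = (\<lambda>T. D (card T) * (sum w T)^2 + D (Suc (card T)) * (P2 - (\<Sum>v\<in>T. (w v)^2) - (sum w T)^2))"
  have s1: "(\<Sum>x\<in>I. \<Sum>y\<in>I. \<Sum>z\<in>I. \<Sum>u\<in>I. w x * w y * w z * w u * h (card (insert u (insert z {x,y}))))
     = (\<Sum>x\<in>I. \<Sum>y\<in>I. w x * w y * F {x,y})"
  proof (intro sum.cong refl)
    fix x y assume xy: "x \<in> I" "y \<in> I"
    have "(\<Sum>z\<in>I. \<Sum>u\<in>I. w x * w y * w z * w u * h (card (insert u (insert z {x,y}))))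
       = (\<Sum>z\<in>I. w x * w y * (w z * (\<Sum>u\<in>I. w u * h (card (insert u (insert z {x,y}))))))"
      by (simp add: sum_distrib_left mult_ac)
    also have "\<dots> = (\<Sum>z\<in>I. w x * w y * (w z * D (card (insert z {x,y})) * sum w (insert z {x,y})))"
    proof (intro sum.cong refl)
      fix z assume "z \<in> I"
      show "w x * w y * (w z * (\<Sum>u\<in>I. w u * h (card (insert u (insert z {x,y}))))) =
        w x * w y * (w z * D (card (insert z {x,y})) * sum w (insert z {x,y}))"
        using elim1[OF fin _ w0, of "insert z {x,y}" h] xy \<open>z \<in> I\<close> by (simp add: D_def)
    qed
    also have "\<dots> = w x * w y * (\<Sum>z\<in>I. w z * D (card (insert z {x,y})) * sum w (insert z {x,y}))"
      by (simp add: sum_distrib_left)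
    also have "\<dots> = w x * w y * F {x,y}"
      using elim2[OF fin _ w0, of "{x,y}" D] xy by (simp add: F_def P2_def)
    finally show "(\<Sum>z\<in>I. \<Sum>u\<in>I. w x * w y * w z * w u * h (card (insert u (insert z {x,y})))) = w x * w y * F {x,y}" .
  qed
  define c0 where "c0 = (D 2 - 2 * D 3) * P3"
  define c1 where "c1 = (3 * D 2 - 3 * D 3) * P2"
  define c3 where "c3 = D 1 - 6 * D 2 + 6 * D 3"
  have s2: "(\<Sum>y\<in>I. w y * F {x,y}) = c3 * (w x)^3 + c1 * w x + c0" if x: "x \<in> I" for x
  proof -
    define G where "G = (\<lambda>y. D 2 * (w x + w y)^2 + D 3 * (P2 - ((w x)^2 + (w y)^2) - (w x + w y)^2))"
    have eqG: "F {x,y} = G y" if "y \<noteq> x" for y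
      using that by (simp add: F_def G_def numeral_2_eq_2 numeral_3_eq_3)
    have Fx: "F {x,x} = D 1 * (w x)^2 + D 2 * (P2 - 2 * (w x)^2)"
      by (simp add: F_def numeral_2_eq_2 power2_eq_square)
    have "(\<Sum>y\<in>I. w y * F {x,y}) = w x * F {x,x} + (\<Sum>y\<in>I-{x}. w y * F {x,y})"
      by (rule sum.remove[OF fin x])
    also have "(\<Sum>y\<in>I-{x}. w y * F {x,y}) = (\<Sum>y\<in>I-{x}. w y * G y)"
      by (intro sum.cong refl) (simp add: eqG)
    also have "\<dots> = (\<Sum>y\<in>I. w y * G y) - w x * G x"
      using sum.remove[OF fin x, of "\<lambda>y. w y * G y"] by simp
    also have "(\<Sum>y\<in>I. w y * G y) = (\<Sum>y\<in>I. (D 2 * (w x)^2 + D 3 * P2 - 2 * D 3 * (w x)^2) * w y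
          + ((2 * D 2 - 2 * D 3) * w x) * (w y)^2 + (D 2 - 2 * D 3) * (w y)^3)"
      by (intro sum.cong refl) (simp add: G_def power2_eq_square power3_eq_cube algebra_simps)
    also have "\<dots> = (D 2 * (w x)^2 + D 3 * P2 - 2 * D 3 * (w x)^2) * sum w I
          + ((2 * D 2 - 2 * D 3) * w x) * P2 + (D 2 - 2 * D 3) * P3"
      by (simp add: sum.distrib sum_distrib_left P2_def P3_def)
    finally show ?thesis using w0 unfolding Fx G_def c0_def c1_def c3_def
      by (simp add: power2_eq_square power3_eq_cube algebra_simps)
  qed
  have "(\<Sum>x\<in>I. \<Sum>y\<in>I. w x * w y * F {x,y}) = (\<Sum>x\<in>I. w x * (c3 * (w x)^3 + c1 * w x + c0))"
  proof (intro sum.cong refl)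
    fix x assume "x \<in> I"
    show "(\<Sum>y\<in>I. w x * w y * F {x,y}) = w x * (c3 * (w x)^3 + c1 * w x + c0)"
      using s2[OF \<open>x \<in> I\<close>] by (simp add: sum_distrib_left[symmetric] mult.assoc)
  qed
  also have "\<dots> = (\<Sum>x\<in>I. c3 * (w x)^4 + c1 * (w x)^2 + c0 * w x)"
    by (intro sum.cong refl) (simp add: power2_eq_square power3_eq_cube power4_eq_xxxx algebra_simps)
  also have "\<dots> = c3 * P4 + c1 * P2 + c0 * sum w I"
    by (simp add: sum.distrib sum_distrib_left P4_def P2_def)
  finally show ?thesis using s1 w0 unfolding c3_def c1_def P2_def P4_def
    by (simp add: power2_eq_square algebra_simps)
qed



lemma cnt_le:
  assumes fin: "finite I" and cI: "card I = 2 * m"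
  shows "cnt (card I) m j \<le> card (HS I m)"
proof (cases "j \<le> m")
  case True
  then have "j \<le> card I" using cI by simp
  then obtain A where A: "A \<subseteq> I" "card A = j" using obtain_subset_with_card_n by metis
  have "cnt (card I) m j = card {S\<in>HS I m. A \<subseteq> S}" using card_sup[OF fin A(1)] A(2) by simp
  also have "\<dots> \<le> card (HS I m)" by (rule card_mono[OF finite_HS[OF fin]]) auto
  finally show ?thesis .
next
  case False
  then show ?thesis by (simp add: cnt_def)
qed

lemma cardHS: "finite I \<Longrightarrow> card (HS I m) = card I choose m"
  unfolding HS_def by (rule n_subsets)

lemma binom_facts:
  assumes "m \<ge> 1"
  shows "4 * (real (cnt (2*m) m 1) - real (cnt (2*m) m 2)) \<ge> real ((2*m) choose m)"
proof -
  define h1 where "h1 = (2*m - 1) choose (m - 1)"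
  have c1: "cnt (2*m) m 1 = h1" using assms by (simp add: cnt_def h1_def)
  have e1: "Suc (2*m-1) * ((2*m-1) choose (m-1)) = (Suc (2*m-1) choose Suc (m-1)) * Suc (m-1)"
    by (rule Suc_times_binomial_eq)
  then have "2*m * h1 = ((2*m) choose m) * m" using assms unfolding h1_def
    by (metis Suc_diff_1 mult_eq_0_iff nat_0_less_mult_iff not_one_le_zero pos2 zero_less_iff_neq_zero)
  then have hN: "(2*m) choose m = 2 * h1" using assms by (simp add: mult.commute)
  have "2 * cnt (2*m) m 2 \<le> h1"
  proof (cases "m \<ge> 2")
    case True
    define h2 where "h2 = (2*m - 2) choose (m - 2)"
    have c2: "cnt (2*m) m 2 = h2" using True by (simp add: cnt_def h2_def)
    have "Suc (2*m-2) * ((2*m-2) choose (m-2)) = (Suc (2*m-2) choose Suc (m-2)) * Suc (m-2)"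
      by (rule Suc_times_binomial_eq)
    moreover have "Suc (2*m-2) = 2*m-1" "Suc (m-2) = m - 1" using True by auto
    ultimately have "(2*m-1) * h2 = h1 * (m-1)" unfolding h1_def h2_def by simp
    then have "(2*m-1) * (2*h2) = h1 * (2*m-2)" by (simp add: algebra_simps diff_mult_distrib2)
    also have "\<dots> \<le> h1 * (2*m-1)" by (intro mult_left_mono) auto
    finally have "(2*m-1) * (2*h2) \<le> (2*m-1) * h1" by (simp add: mult.commute)
    then have "2*h2 \<le> h1" using True by simp
    then show ?thesis using c2 by simp
  next
    case False
    then show ?thesis by (simp add: cnt_def)
  qed
  then have "2 * real (cnt (2*m) m 2) \<le> real h1" by (metis of_nat_le_iff of_nat_mult of_nat_numeral)
  then show ?thesis using hN c1 by simp
qed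

lemma sq_sum_le:
  fixes a :: "'a \<Rightarrow> real"
  assumes "finite A" "\<forall>x\<in>A. a x \<ge> 0"
  shows "(\<Sum>x\<in>A. (a x)^2) \<le> (\<Sum>x\<in>A. a x)^2"
  using assms
proof (induction A rule: finite_induct)
  case (insert x F)
  have "0 \<le> sum a F" using insert by (simp add: sum_nonneg)
  then have "0 \<le> 2 * a x * sum a F" using insert by simp
  then show ?case using insert by (simp add: power2_eq_square algebra_simps)
qed simp

lemma PZ:
  fixes Z :: "'b \<Rightarrow> real" and t B :: real
  assumes fin: "finite H" and nn: "\<And>S. S \<in> H \<Longrightarrow> Z S \<ge> 0" and t: "t \<ge> 0"
    and s1: "2 * t * card H \<le> (\<Sum>S\<in>H. Z S)" and s2: "(\<Sum>S\<in>H. (Z S)^2) \<le> B"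
  shows "(t * card H)^2 \<le> B * card {S\<in>H. t \<le> Z S}"
proof -
  define G where "G = {S\<in>H. t \<le> Z S}"
  have GH: "G \<subseteq> H" unfolding G_def by auto
  have finG: "finite G" using fin GH finite_subset by blast
  have "(\<Sum>S\<in>H. Z S) = (\<Sum>S\<in>H-G. Z S) + (\<Sum>S\<in>G. Z S)" by (rule sum.subset_diff[OF GH fin])
  moreover have "(\<Sum>S\<in>H-G. Z S) \<le> (\<Sum>S\<in>H-G. t)"
    by (intro sum_mono) (auto simp: G_def)
  moreover have "(\<Sum>S\<in>H-G. t) \<le> t * card H"
    using card_mono[OF fin, of "H - G"] t by (simp add: mult_left_mono mult.commute)
  ultimately have g1: "t * card H \<le> (\<Sum>S\<in>G. Z S)" using s1 by linarith
  have "0 \<le> t * card H" using t by simp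
  then have "(t * card H)^2 \<le> (\<Sum>S\<in>G. Z S)^2" using g1 by (simp add: power_mono)
  also have "\<dots> \<le> (\<Sum>S\<in>G. (Z S)^2) * card G" by (rule sum_squared_le_sum_of_squares)
  also have "(\<Sum>S\<in>G. (Z S)^2) \<le> (\<Sum>S\<in>H. (Z S)^2)"
    by (rule sum_mono2[OF fin GH]) simp
  then have "(\<Sum>S\<in>G. (Z S)^2) * card G \<le> B * card G" using s2 by (simp add: mult_right_mono)
  finally show ?thesis unfolding G_def .
qed



lemma oneD:
  fixes w :: "'a \<Rightarrow> real"
  assumes fin: "finite I" and cI: "card I = 2*m" and m1: "m \<ge> 1" and w0: "sum w I = 0"
  shows "real (card (HS I m)) \<le> 1216 * real (card {S\<in>HS I m. (\<Sum>v\<in>I. (w v)^2)/8 \<le> (sum w S)^2})"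
    and "(\<Sum>S\<in>HS I m. (sum w S)^2) \<le> real (card (HS I m)) * (\<Sum>v\<in>I. (w v)^2)"
proof -
  define P2 where "P2 = (\<Sum>v\<in>I. (w v)^2)"
  define P4 where "P4 = (\<Sum>v\<in>I. (w v)^4)"
  define h where "h = (\<lambda>j. real (cnt (card I) m j))"
  define n where "n = real (card (HS I m))"
  define D where "D = (\<lambda>j. h j - h (Suc j))"
  have hb: "0 \<le> h j \<and> h j \<le> n" for j
    using cnt_le[OF fin cI, of j] unfolding h_def n_def by simp
  have Db: "\<bar>D j\<bar> \<le> n" for j using hb[of j] hb[of "Suc j"] unfolding D_def by auto
  have P2nn: "0 \<le> P2" unfolding P2_def by (simp add: sum_nonneg)
  have P4le: "P4 \<le> P2^2"
    using sq_sum_le[OF fin, of "\<lambda>v. (w v)^2"] unfolding P4_def P2_def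
    by (simp add: power_mult[symmetric])
  have P4nn: "0 \<le> P4" unfolding P4_def by (simp add: sum_nonneg)
  have npos: "n > 0" unfolding n_def using cardHS[OF fin, of m] cI by simp
  have M2: "(\<Sum>S\<in>HS I m. (sum w S)^2) = (h 1 - h 2) * P2"
  proof -
    have "(\<Sum>S\<in>HS I m. (sum w S)^2) = (\<Sum>x\<in>I. \<Sum>y\<in>I. w x * w y * h (card {x,y}))"
      unfolding h_def by (rule mom2[OF fin])
    also have "\<dots> = (\<Sum>x\<in>I. w x * (\<Sum>y\<in>I. w y * h (card (insert y {x}))))"
      by (simp add: sum_distrib_left mult_ac insert_commute)
    also have "\<dots> = (\<Sum>x\<in>I. (h 1 - h 2) * (w x)^2)"
    proof (intro sum.cong refl)
      fix x assume "x \<in> I"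
      then show "w x * (\<Sum>y\<in>I. w y * h (card (insert y {x}))) = (h 1 - h 2) * (w x)^2"
        using elim1[OF fin _ w0, of "{x}" h] by (simp add: power2_eq_square numeral_2_eq_2)
    qed
    also have "\<dots> = (h 1 - h 2) * P2" by (simp add: P2_def sum_distrib_left)
    finally show ?thesis .
  qed
  have M4: "(\<Sum>S\<in>HS I m. (sum w S)^4) \<le> 19 * n * P2^2"
  proof -
    have "(\<Sum>S\<in>HS I m. (sum w S)^4) = 3 * (D 2 - D 3) * P2^2 + (D 1 - 6 * D 2 + 6 * D 3) * P4"
      unfolding mom4[OF fin] P2_def P4_def D_def h_def by (rule m4_formula[OF fin w0])
    also have "\<dots> \<le> 6 * n * P2^2 + 13 * n * P4"
    proof -
      have "3 * (D 2 - D 3) \<le> 6 * n" using Db[of 2] Db[of 3] by auto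
      then have a: "3 * (D 2 - D 3) * P2^2 \<le> 6 * n * P2^2" by (simp add: mult_right_mono)
      have "D 1 - 6 * D 2 + 6 * D 3 \<le> 13 * n" using Db[of 1] Db[of 2] Db[of 3] by auto
      then have b: "(D 1 - 6 * D 2 + 6 * D 3) * P4 \<le> 13 * n * P4" using P4nn by (simp add: mult_right_mono)
      show ?thesis using a b by simp
    qed
    also have "\<dots> \<le> 19 * n * P2^2" using P4le npos by (simp add: mult_left_mono)
    finally show ?thesis .
  qed
  have hdiff: "n / 4 \<le> h 1 - h 2"
    using binom_facts[OF m1] cardHS[OF fin, of m] cI unfolding h_def n_def by simp
  have hdiff2: "h 1 - h 2 \<le> n" using hb[of 1] hb[of 2] by simp
  show "(\<Sum>S\<in>HS I m. (sum w S)^2) \<le> real (card (HS I m)) * (\<Sum>v\<in>I. (w v)^2)"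
    using M2 hdiff2 P2nn unfolding n_def P2_def[symmetric] by (simp add: mult_right_mono)
  define c where "c = real (card {S\<in>HS I m. P2/8 \<le> (sum w S)^2})"
  have "n \<le> 1216 * c"
  proof (cases "P2 = 0")
    case True
    then have "{S\<in>HS I m. P2/8 \<le> (sum w S)^2} = HS I m" by auto
    then show ?thesis unfolding c_def n_def by simp
  next
    case False
    then have P2pos: "P2 > 0" using P2nn by simp
    have "(P2/8 * n)^2 \<le> (19 * n * P2^2) * c"
      unfolding c_def n_def
    proof (rule PZ[OF finite_HS[OF fin]])
      show "0 \<le> P2/8" using P2nn by simp
      show "2 * (P2 / 8) * real (card (HS I m)) \<le> (\<Sum>S\<in>HS I m. (sum w S)^2)"
      proof -
        have "P2 * n \<le> P2 * (4 * (h 1 - h 2))" using hdiff P2nn by (intro mult_left_mono) auto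
        then show ?thesis using M2 unfolding n_def by (simp add: algebra_simps)
      qed
      show "(\<Sum>S\<in>HS I m. ((sum w S)^2)^2) \<le> 19 * real (card (HS I m)) * P2^2"
        using M4 unfolding n_def by (simp add: power_mult[symmetric])
    qed simp
    then have "P2^2 * n * (n - 1216 * c) \<le> 0" by (simp add: power2_eq_square algebra_simps)
    moreover have "P2^2 * n > 0" using P2pos npos by simp
    ultimately have "n - 1216 * c \<le> 0" using mult_pos_pos[of "P2^2*n" "n-1216*c"] by linarith
    then show ?thesis by simp
  qed
  then show "real (card (HS I m)) \<le> 1216 * real (card {S\<in>HS I m. (\<Sum>v\<in>I. (w v)^2)/8 \<le> (sum w S)^2})"
    unfolding n_def c_def P2_def .
qed



lemma oneD_abs:
  fixes w :: "'a \<Rightarrow> real"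
  assumes fin: "finite I" and cI: "card I = 2*m" and m1: "m \<ge> 1" and w0: "sum w I = 0"
  shows "real (card (HS I m)) * sqrt (\<Sum>v\<in>I. (w v)^2) / 3648 \<le> (\<Sum>S\<in>HS I m. \<bar>sum w S\<bar>)"
proof -
  define P2 where "P2 = (\<Sum>v\<in>I. (w v)^2)"
  define G where "G = {S\<in>HS I m. P2/8 \<le> (sum w S)^2}"
  have P2nn: "0 \<le> P2" unfolding P2_def by (simp add: sum_nonneg)
  have G1: "real (card (HS I m)) \<le> 1216 * real (card G)"
    using oneD(1)[OF assms] unfolding G_def P2_def .
  have GH: "G \<subseteq> HS I m" unfolding G_def by auto
  have lb: "sqrt P2 / 3 \<le> \<bar>sum w S\<bar>" if "S \<in> G" for S
  proof (rule power2_le_imp_le)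
    have "(sqrt P2 / 3)^2 = P2 / 9" using P2nn by (simp add: power_divide)
    also have "\<dots> \<le> P2 / 8" using P2nn by simp
    also have "\<dots> \<le> (sum w S)^2" using that unfolding G_def by simp
    finally show "(sqrt P2 / 3)^2 \<le> \<bar>sum w S\<bar>^2" by simp
  qed simp
  have "real (card (HS I m)) * sqrt P2 / 3648 \<le> real (card G) * (sqrt P2 / 3)"
  proof -
    have "real (card (HS I m)) * sqrt P2 \<le> 1216 * real (card G) * sqrt P2"
      using G1 P2nn by (intro mult_right_mono) auto
    then show ?thesis by (simp add: mult_ac)
  qed
  also have "\<dots> = (\<Sum>S\<in>G. sqrt P2 / 3)" by simp
  also have "\<dots> \<le> (\<Sum>S\<in>G. \<bar>sum w S\<bar>)" by (rule sum_mono) (rule lb)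
  also have "\<dots> \<le> (\<Sum>S\<in>HS I m. \<bar>sum w S\<bar>)"
    by (rule sum_mono2[OF finite_HS[OF fin] GH]) simp
  finally show ?thesis unfolding P2_def .
qed



lemma twoD:
  fixes q :: "'a \<Rightarrow> 'a \<Rightarrow> real"
  assumes fin: "finite I" and cI: "card I = 2*m" and m1: "m \<ge> 1"
    and row: "\<And>x. x \<in> I \<Longrightarrow> (\<Sum>y\<in>I. q x y) = 0"
    and col: "\<And>y. y \<in> I \<Longrightarrow> (\<Sum>x\<in>I. q x y) = 0"
  shows "real (card (HS I m))^2 \<le> (7296^2 * 1216) * real (card {(S1,S2)\<in>HS I m \<times> HS I m.
            (\<Sum>y\<in>I. \<Sum>x\<in>I. \<bar>q x y\<bar>) / (21888 * real (card I)) \<le> \<bar>\<Sum>y\<in>S2. \<Sum>x\<in>S1. q x y\<bar>})"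
proof -
  define H where "H = HS I m"
  define n where "n = real (card H)"
  define T where "T = (\<Sum>y\<in>I. \<Sum>x\<in>I. \<bar>q x y\<bar>)"
  define K where "K = real (card I)"
  define Good where "Good = {(S1,S2)\<in>H \<times> H. T / (21888 * K) \<le> \<bar>\<Sum>y\<in>S2. \<Sum>x\<in>S1. q x y\<bar>}"
  have finH: "finite H" unfolding H_def by (rule finite_HS[OF fin])
  have npos: "n > 0" unfolding n_def H_def using cardHS[OF fin, of m] cI by simp
  have Kpos: "K > 0" unfolding K_def using cI m1 by simp
  have Tnn: "T \<ge> 0" unfolding T_def by (simp add: sum_nonneg)
  have finGood: "finite Good"
    by (rule finite_subset[of _ "H \<times> H"]) (auto simp: Good_def finH)
  have main: "n^2 \<le> (7296^2 * 1216) * real (card Good)"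
  proof (cases "T = 0")
    case True
    then have "Good = H \<times> H" unfolding Good_def by auto
    then show ?thesis unfolding n_def by (simp add: card_cartesian_product power2_eq_square)
  next
    case False
    then have Tpos: "T > 0" using Tnn by simp
    define s where "s = (\<lambda>y. sqrt (\<Sum>x\<in>I. (q x y)^2))"
    define A where "A = (\<Sum>y\<in>I. s y)"
    define r where "r = (\<lambda>S1 y. \<Sum>x\<in>S1. q x y)"
    define L where "L = (\<lambda>S1. \<Sum>y\<in>I. \<bar>r S1 y\<bar>)"
    have snn: "s y \<ge> 0" for y unfolding s_def by (simp add: sum_nonneg)
    have Ann: "A \<ge> 0" unfolding A_def using snn by (simp add: sum_nonneg)
    have colT: "(\<Sum>x\<in>I. \<bar>q x y\<bar>) \<le> sqrt K * s y" for y
    proof -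
      have "(\<Sum>x\<in>I. \<bar>q x y\<bar>)^2 \<le> (\<Sum>x\<in>I. \<bar>q x y\<bar>^2) * K"
        unfolding K_def by (rule sum_squared_le_sum_of_squares)
      also have "\<dots> = K * (\<Sum>x\<in>I. (q x y)^2)" by (simp add: mult.commute)
      also have "\<dots> = (sqrt K * s y)^2" unfolding s_def using Kpos
        by (simp add: power_mult_distrib sum_nonneg)
      finally have "(\<Sum>x\<in>I. \<bar>q x y\<bar>)^2 \<le> (sqrt K * s y)^2" .
      then show ?thesis
        by (rule power2_le_imp_le) (use snn[of y] Kpos in simp)
    qed
    have TA: "T \<le> sqrt K * A"
      unfolding T_def A_def sum_distrib_left by (rule sum_mono) (rule colT)
    then have Apos: "A > 0" using Tpos Ann by (cases "A = 0") auto
    have EL: "n * A / 3648 \<le> (\<Sum>S\<in>H. L S)"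
    proof -
      have "n * A / 3648 = (\<Sum>y\<in>I. n * s y / 3648)" unfolding A_def
        by (simp add: sum_distrib_left sum_divide_distrib)
      also have "\<dots> \<le> (\<Sum>y\<in>I. \<Sum>S\<in>H. \<bar>r S y\<bar>)"
      proof (rule sum_mono)
        fix y assume y: "y \<in> I"
        show "n * s y / 3648 \<le> (\<Sum>S\<in>H. \<bar>r S y\<bar>)"
          using oneD_abs[OF fin cI m1, of "\<lambda>x. q x y"] col[OF y]
          unfolding n_def H_def s_def r_def by simp
      qed
      also have "\<dots> = (\<Sum>S\<in>H. L S)" unfolding L_def by (rule sum.swap)
      finally show ?thesis .
    qed
    have r2: "(\<Sum>S\<in>H. (r S y)^2) \<le> n * (s y)^2" if y: "y \<in> I" for y
      using oneD(2)[OF fin cI m1, of "\<lambda>x. q x y"] col[OF y]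
      unfolding n_def H_def s_def r_def by (simp add: sum_nonneg)
    have cross: "(\<Sum>S\<in>H. \<bar>r S y\<bar> * \<bar>r S y'\<bar>) \<le> n * s y * s y'" if "y \<in> I" "y' \<in> I" for y y'
    proof (rule power2_le_imp_le)
      have "(\<Sum>S\<in>H. \<bar>r S y\<bar> * \<bar>r S y'\<bar>)^2 \<le> (\<Sum>S\<in>H. \<bar>r S y\<bar>^2) * (\<Sum>S\<in>H. \<bar>r S y'\<bar>^2)"
        by (rule Cauchy_Schwarz_ineq_sum)
      also have "\<dots> \<le> (n * (s y)^2) * (n * (s y')^2)"
        using r2[OF that(1)] r2[OF that(2)] npos by (intro mult_mono) (auto simp: sum_nonneg)
      also have "\<dots> = (n * s y * s y')^2" by (simp add: power2_eq_square)
      finally show "(\<Sum>S\<in>H. \<bar>r S y\<bar> * \<bar>r S y'\<bar>)^2 \<le> (n * s y * s y')^2" .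
      show "0 \<le> n * s y * s y'" using npos snn by simp
    qed
    have EL2: "(\<Sum>S\<in>H. (L S)^2) \<le> n * A^2"
    proof -
      have "(\<Sum>S\<in>H. (L S)^2) = (\<Sum>S\<in>H. \<Sum>y\<in>I. \<Sum>y'\<in>I. \<bar>r S y\<bar> * \<bar>r S y'\<bar>)"
        unfolding L_def by (simp add: power2_eq_square sum_product)
      also have "\<dots> = (\<Sum>y\<in>I. \<Sum>y'\<in>I. \<Sum>S\<in>H. \<bar>r S y\<bar> * \<bar>r S y'\<bar>)"
        by (simp only: sum.swap[where A=H])
      also have "\<dots> \<le> (\<Sum>y\<in>I. \<Sum>y'\<in>I. n * s y * s y')"
        by (intro sum_mono cross)
      also have "\<dots> = n * A^2" unfolding A_def
        by (simp add: power2_eq_square sum_product sum_distrib_left mult_ac)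
      finally show ?thesis .
    qed
    define G1 where "G1 = {S\<in>H. A / 7296 \<le> L S}"
    have cG1: "(A / 7296 * n)^2 \<le> (n * A^2) * real (card G1)"
      unfolding G1_def n_def
    proof (rule PZ[OF finH])
      show "0 \<le> A / 7296" using Ann by simp
      show "2 * (A / 7296) * real (card H) \<le> (\<Sum>S\<in>H. L S)" using EL unfolding n_def by (simp add: mult.commute)
      show "(\<Sum>S\<in>H. (L S)^2) \<le> real (card H) * A^2" using EL2 unfolding n_def .
    qed (simp add: L_def sum_nonneg)
    have G1n: "n \<le> 7296^2 * real (card G1)"
    proof -
      have "n * A^2 * (n - 7296^2 * real (card G1)) \<le> 0"
        using cG1 by (simp add: power2_eq_square algebra_simps)
      moreover have "n * A^2 > 0" using npos Apos by simp
      ultimately show ?thesis using mult_pos_pos[of "n * A^2" "n - 7296^2 * real (card G1)"] by linarith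
    qed
    define G2 where "G2 = (\<lambda>S1. {S2\<in>H. (\<Sum>y\<in>I. (r S1 y)^2)/8 \<le> (\<Sum>y\<in>S2. r S1 y)^2})"
    have G2n: "n \<le> 1216 * real (card (G2 S1))" if "S1 \<in> H" for S1
    proof -
      have S1I: "S1 \<subseteq> I" using that unfolding H_def HS_def by auto
      have "(\<Sum>y\<in>I. r S1 y) = (\<Sum>x\<in>S1. \<Sum>y\<in>I. q x y)" unfolding r_def by (rule sum.swap)
      also have "\<dots> = 0" using row S1I by (simp add: subset_iff)
      finally have "(\<Sum>y\<in>I. r S1 y) = 0" .
      from oneD(1)[OF fin cI m1 this] show ?thesis unfolding n_def G2_def H_def .
    qed
    have sub: "Sigma G1 G2 \<subseteq> Good"
    proof clarify
      fix S1 S2 assume S1: "S1 \<in> G1" and S2: "S2 \<in> G2 S1"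
      have S1H: "S1 \<in> H" and LA: "A / 7296 \<le> L S1" using S1 unfolding G1_def by auto
      have S2H: "S2 \<in> H" and f2: "(\<Sum>y\<in>I. (r S1 y)^2)/8 \<le> (\<Sum>y\<in>S2. r S1 y)^2"
        using S2 unfolding G2_def by auto
      have "(L S1)^2 \<le> (\<Sum>y\<in>I. \<bar>r S1 y\<bar>^2) * K"
        unfolding L_def K_def by (rule sum_squared_le_sum_of_squares)
      then have LK: "(L S1)^2 \<le> (\<Sum>y\<in>I. (r S1 y)^2) * K" by simp
      have "T / (7296 * sqrt K) \<le> A / 7296" using TA Kpos
        by (simp add: divide_simps mult.commute)
      also have "\<dots> \<le> L S1" by (rule LA)
      finally have "T / (7296 * sqrt K) \<le> L S1" .
      then have "(T / (7296 * sqrt K))^2 \<le> (L S1)^2" using Tnn Kpos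
        by (intro power_mono) auto
      then have "T^2 / (7296^2 * K) \<le> (L S1)^2" using Kpos
        by (simp add: power_divide power_mult_distrib)
      then have "T^2 / (7296^2 * K) \<le> (\<Sum>y\<in>I. (r S1 y)^2) * K" using LK by linarith
      then have "T^2 / (7296^2 * K^2) \<le> (\<Sum>y\<in>I. (r S1 y)^2)" using Kpos
        by (simp add: divide_simps power2_eq_square mult_ac)
      then have "T^2 / (7296^2 * K^2) / 8 \<le> (\<Sum>y\<in>I. (r S1 y)^2) / 8" by (rule divide_right_mono) simp
      then have X8: "T^2 / (7296^2 * K^2) / 8 \<le> (\<Sum>y\<in>S2. r S1 y)^2" using f2 by (rule order_trans)
      have "(T / (21888 * K))^2 = T^2 / (7296^2 * K^2) / 9"
        by (simp add: power_divide power_mult_distrib)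
      also have "\<dots> \<le> T^2 / (7296^2 * K^2) / 8"
        by (rule divide_left_mono) (simp_all add: divide_nonneg_nonneg)
      finally have "(T / (21888 * K))^2 \<le> (\<Sum>y\<in>S2. r S1 y)^2" using X8 by linarith
      then have "(T / (21888 * K))^2 \<le> \<bar>\<Sum>y\<in>S2. r S1 y\<bar>^2" by simp
      then have "T / (21888 * K) \<le> \<bar>\<Sum>y\<in>S2. r S1 y\<bar>" by (rule power2_le_imp_le) simp
      then show "(S1, S2) \<in> Good" unfolding Good_def r_def using S1H S2H by simp
    qed
    have "n^2 \<le> 7296^2 * real (card G1) * n" using G1n npos by (simp add: power2_eq_square mult_right_mono)
    also have "\<dots> = 7296^2 * (\<Sum>S1\<in>G1. n)" by simp
    also have "\<dots> \<le> 7296^2 * (\<Sum>S1\<in>G1. 1216 * real (card (G2 S1)))"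
      using G2n unfolding G1_def by (intro mult_left_mono sum_mono) auto
    also have "\<dots> = (7296^2 * 1216) * real (card (Sigma G1 G2))"
    proof -
      have "finite G1" unfolding G1_def using finH by simp
      moreover have "\<forall>a\<in>G1. finite (G2 a)" unfolding G2_def using finH by simp
      ultimately have "card (Sigma G1 G2) = (\<Sum>a\<in>G1. card (G2 a))" by (rule card_SigmaI)
      then show ?thesis by (simp add: sum_distrib_left)
    qed
    also have "\<dots> \<le> (7296^2 * 1216) * real (card Good)"
      using card_mono[OF finGood sub] by simp
    finally show ?thesis .
  qed
  then show ?thesis unfolding n_def Good_def H_def T_def K_def .
qed



theorem corollary6p7:
  shows "\<exists>c::real. \<exists>\<rho>::real. c > 0 \<and> \<rho> > 0 \<and>
    (\<forall>k::nat. \<forall>p. even k \<and> k \<ge> 2 \<and> is_dist k p \<longrightarrow>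
      real (card {(S1, S2) \<in> half_subsets k \<times> half_subsets k.
          \<bar>mass p (S1 \<times> S2) - mass (marg1 k p) S1 * mass (marg2 k p) S2\<bar>
            \<ge> c * dTV k p (prod_dist (marg1 k p) (marg2 k p)) / real k})
        / real (card (half_subsets k \<times> half_subsets k)) \<ge> \<rho>)"
proof (intro exI conjI allI impI)
  show "(1/10944::real) > 0" by simp
  show "(1 / (7296^2 * 1216) :: real) > 0" by simp
  fix k :: nat and p
  assume asm: "even k \<and> k \<ge> 2 \<and> is_dist k p"
  define I where "I = {1..k}"
  define m where "m = k div 2"
  have fin: "finite I" unfolding I_def by simp
  have cI: "card I = 2 * m" unfolding I_def m_def using asm by simp
  have m1: "m \<ge> 1" unfolding m_def using asm div_le_mono[of 2 k 2] by simp
  have HSeq: "half_subsets k = HS I m" unfolding half_subsets_def HS_def I_def m_def by simp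
  define m1f where "m1f = marg1 k p"
  define m2f where "m2f = marg2 k p"
  define q where "q = (\<lambda>x y. p (x, y) - m1f x * m2f y)"
  have tot: "(\<Sum>x\<in>I. \<Sum>y\<in>I. p (x, y)) = 1"
    using asm unfolding is_dist_def I_def by (simp add: sum.cartesian_product)
  have s1: "(\<Sum>x\<in>I. m1f x) = 1" using tot unfolding m1f_def marg1_def I_def by simp
  have s2: "(\<Sum>y\<in>I. m2f y) = 1"
  proof -
    have "(\<Sum>y\<in>I. m2f y) = (\<Sum>y\<in>I. \<Sum>x\<in>I. p (x, y))" unfolding m2f_def marg2_def I_def by simp
    also have "\<dots> = (\<Sum>x\<in>I. \<Sum>y\<in>I. p (x, y))" by (rule sum.swap)
    finally show ?thesis using tot by simp
  qed
  have row: "(\<Sum>y\<in>I. q x y) = 0" if "x \<in> I" for x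
  proof -
    have "(\<Sum>y\<in>I. q x y) = (\<Sum>y\<in>I. p (x, y)) - m1f x * (\<Sum>y\<in>I. m2f y)"
      unfolding q_def by (simp add: sum_subtractf sum_distrib_left)
    then show ?thesis using s2 unfolding m1f_def marg1_def I_def by simp
  qed
  have col: "(\<Sum>x\<in>I. q x y) = 0" if "y \<in> I" for y
  proof -
    have "(\<Sum>x\<in>I. q x y) = (\<Sum>x\<in>I. p (x, y)) - (\<Sum>x\<in>I. m1f x) * m2f y"
      unfolding q_def by (simp add: sum_subtractf sum_distrib_right)
    then show ?thesis using s1 unfolding m2f_def marg2_def I_def by simp
  qed
  define T where "T = (\<Sum>y\<in>I. \<Sum>x\<in>I. \<bar>q x y\<bar>)"
  have dtv: "dTV k p (prod_dist m1f m2f) = T / 2"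
  proof -
    have "dTV k p (prod_dist m1f m2f) = (1/2) * (\<Sum>x\<in>I. \<Sum>y\<in>I. \<bar>q x y\<bar>)"
      unfolding dTV_def I_def q_def prod_dist_def
      by (simp add: sum.cartesian_product split_beta' case_prod_beta)
    also have "(\<Sum>x\<in>I. \<Sum>y\<in>I. \<bar>q x y\<bar>) = T" unfolding T_def by (rule sum.swap)
    finally show ?thesis by simp
  qed
  have diff: "mass p (S1 \<times> S2) - mass m1f S1 * mass m2f S2 = (\<Sum>y\<in>S2. \<Sum>x\<in>S1. q x y)"
    if "S1 \<subseteq> I" "S2 \<subseteq> I" for S1 S2
  proof -
    have f1: "finite S1" "finite S2" using that fin finite_subset by blast+
    have "mass p (S1 \<times> S2) = (\<Sum>x\<in>S1. \<Sum>y\<in>S2. p (x, y))"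
      unfolding mass_def by (simp add: sum.cartesian_product)
    moreover have "mass m1f S1 * mass m2f S2 = (\<Sum>x\<in>S1. \<Sum>y\<in>S2. m1f x * m2f y)"
      unfolding mass_def by (rule sum_product)
    ultimately have "mass p (S1 \<times> S2) - mass m1f S1 * mass m2f S2 = (\<Sum>x\<in>S1. \<Sum>y\<in>S2. q x y)"
      unfolding q_def by (simp add: sum_subtractf)
    also have "\<dots> = (\<Sum>y\<in>S2. \<Sum>x\<in>S1. q x y)" by (rule sum.swap)
    finally show ?thesis .
  qed
  have seteq: "{(S1, S2) \<in> half_subsets k \<times> half_subsets k.
          \<bar>mass p (S1 \<times> S2) - mass (marg1 k p) S1 * mass (marg2 k p) S2\<bar>
            \<ge> (1/10944) * dTV k p (prod_dist (marg1 k p) (marg2 k p)) / real k}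
    = {(S1,S2)\<in>HS I m \<times> HS I m.
            (\<Sum>y\<in>I. \<Sum>x\<in>I. \<bar>q x y\<bar>) / (21888 * real (card I)) \<le> \<bar>\<Sum>y\<in>S2. \<Sum>x\<in>S1. q x y\<bar>}"
  proof -
    have cardI: "real (card I) = real k" unfolding I_def by simp
    have thr: "(1/10944) * dTV k p (prod_dist (marg1 k p) (marg2 k p)) / real k = T / (21888 * real (card I))"
    proof -
      have kpos: "real k > 0" using asm by simp
      show ?thesis using dtv kpos unfolding m1f_def m2f_def cardI by (simp add: field_simps)
    qed
    show ?thesis unfolding HSeq thr T_def
      by (auto simp: HS_def diff[unfolded m1f_def m2f_def])
  qed
  note main = twoD[OF fin cI m1, of q, OF row col]
  have npos: "real (card (HS I m)) > 0" using cardHS[OF fin, of m] cI by simp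
  show "1 / (7296^2 * 1216) \<le> real (card {(S1, S2) \<in> half_subsets k \<times> half_subsets k.
          \<bar>mass p (S1 \<times> S2) - mass (marg1 k p) S1 * mass (marg2 k p) S2\<bar>
            \<ge> (1/10944) * dTV k p (prod_dist (marg1 k p) (marg2 k p)) / real k})
        / real (card (half_subsets k \<times> half_subsets k))"
    unfolding seteq unfolding HSeq card_cartesian_product
  proof -
    define Gc where "Gc = real (card {(S1,S2)\<in>HS I m \<times> HS I m.
            (\<Sum>y\<in>I. \<Sum>x\<in>I. \<bar>q x y\<bar>) / (21888 * real (card I)) \<le> \<bar>\<Sum>y\<in>S2. \<Sum>x\<in>S1. q x y\<bar>})"
    define N where "N = real (card (HS I m))"
    have "N^2 \<le> (7296^2 * 1216) * Gc" using main unfolding Gc_def N_def .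
    moreover have "N > 0" using npos unfolding N_def .
    ultimately have "1 / (7296^2 * 1216) \<le> Gc / (N * N)"
      by (simp add: divide_simps power2_eq_square mult.commute)
    then show "1 / (7296^2 * 1216) \<le> real (card {(S1,S2)\<in>HS I m \<times> HS I m.
            (\<Sum>y\<in>I. \<Sum>x\<in>I. \<bar>q x y\<bar>) / (21888 * real (card I)) \<le> \<bar>\<Sum>y\<in>S2. \<Sum>x\<in>S1. q x y\<bar>})
        / real (card (HS I m) * card (HS I m))"
      unfolding Gc_def N_def by simp
  qed
qed

end
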